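(* Assume the (possibly nonconvex) loss $f(\cdot,z)$ is $\beta$-smooth for all $z\in\mathcal{Z}$. Consider full-batch gradient descent with $T$ iterations and learning rates $\eta_t$, $t\le T+1$. Then for the outputs $W_{T+1}\equiv A(S)$ and $W^{(i)}_{T+1}\equiv A(S^{(i)})$, $$\epsilon_{\mathrm{stab}(A)}\le\frac{4\,\epsilon_{\mathrm{path}}}{n^2}\sum_{t=1}^T\eta_t\prod_{j=t+1}^T(1+\beta\eta_j)^2 .$$
   Context: Let $\mathcal{D}$ be a distribution on $\mathcal{Z}$ and $z_1,\dots,z_n,z_i'$ i.i.d. from $\mathcal{D}$; $S=(z_1,\dots,z_n)$, $S^{(i)}$ is $S$ with $z_i$ replaced by $z_i'$. The loss $f:\mathbb{R}^d\times\mathcal{Z}\to[0,\infty)$ is non-negative; $\beta$-smooth means $\|\nabla f(w,z)-\nabla f(u,z)\|_2\le\beta\|w-u\|_2$ for all $w,u$. Full-batch gradient descent (GD) on $S$: from a fixed initial point $W_1\in\mathbb{R}^d$, $W_{t+1}=W_t-\frac{\eta_t}{n}\sum_{j=1}^n\nabla f(W_t,z_j)$, $t=1,\dots,T$, with output $A(S)=W_{T+1}$; $W^{(i)}_t$ are the GD iterates on $S^{(i)}$ with the same initial point $W^{(i)}_1=W_1$ and the same step sizes. Expected output stability $\epsilon_{\mathrm{stab}(A)}=\mathbb{E}[\|A(S)-A(S^{(i)})\|_2^2]$; expected path error $\epsilon_{\mathrm{path}}=\sum_{t=1}^T\eta_t\,\mathbb{E}[\|\nabla f(W_t,z_i)\|_2^2]$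 (expectations over all samples). *)

theory Defs
  imports "HOL-Probability.Probability"
begin

text \<open>The sample set is encoded as a function
  S :: nat => 'z whose values S 0, ..., S (n-1) are z_1, ..., z_n.
  gd grad eta n W1 S k is the iterate W_(k+1); i.e. gd ... 0 = W_1 and
  W_(t+1) = W_t - (eta_t / n) * sum_j grad(W_t, z_j).\<close>
primrec gd :: "('a::real_normed_vector \<Rightarrow> 'z \<Rightarrow> 'a) \<Rightarrow> (nat \<Rightarrow> real) \<Rightarrow> nat \<Rightarrow> 'a
               \<Rightarrow> (nat \<Rightarrow> 'z) \<Rightarrow> nat \<Rightarrow> 'a" where
  "gd grad eta n W1 S 0 = W1"
| "gd grad eta n W1 S (Suc k) =
     gd grad eta n W1 S k
     - (eta (Suc k) / real n) *\<^sub>R (\<Sum>j<n. grad (gd grad eta n W1 S k) (S j))"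

text \<open>Sample space: s 0, ..., s (n-1) are z_1, ..., z_n and s n is the replacement
  sample z_i'; all i.i.d. from D. The perturbed sample S^(i) is s(i := s n).\<close>
definition sample_space :: "'z measure \<Rightarrow> nat \<Rightarrow> (nat \<Rightarrow> 'z) measure" where
  "sample_space D n = PiM {..n} (\<lambda>_. D)"

definition eps_stab :: "'z measure \<Rightarrow> ('a::real_normed_vector \<Rightarrow> 'z \<Rightarrow> 'a) \<Rightarrow> (nat \<Rightarrow> real)
    \<Rightarrow> nat \<Rightarrow> 'a \<Rightarrow> nat \<Rightarrow> nat \<Rightarrow> ennreal" where
  "eps_stab D grad eta n W1 T i =
     (\<integral>\<^sup>+ s. ennreal ((norm (gd grad eta n W1 s T - gd grad eta n W1 (s(i := s n)) T))\<^sup>2)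
        \<partial>sample_space D n)"

definition eps_path :: "'z measure \<Rightarrow> ('a::real_normed_vector \<Rightarrow> 'z \<Rightarrow> 'a) \<Rightarrow> (nat \<Rightarrow> real)
    \<Rightarrow> nat \<Rightarrow> 'a \<Rightarrow> nat \<Rightarrow> nat \<Rightarrow> ennreal" where
  "eps_path D grad eta n W1 T i =
     (\<Sum>t\<in>{1..T}. ennreal (eta t) *
        (\<integral>\<^sup>+ s. ennreal ((norm (grad (gd grad eta n W1 s (t - 1)) (s i)))\<^sup>2) \<partial>sample_space D n))"

end

theory Submission
  imports Defs
begin

lemma gd_cong:
  assumes "\<And>j. j < n \<Longrightarrow> s j = s' j"
  shows "gd grad eta n W1 s k = gd grad eta n W1 s' k"
  by (induction k) (auto simp: assms intro!: sum.cong)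

lemma gd_bound:
  fixes grad :: "'a::real_normed_vector \<Rightarrow> 'z \<Rightarrow> 'a"
  assumes n: "0 < n" and i: "i < n" and beta: "0 \<le> beta"
    and eta: "\<And>t. t \<in> {1..T} \<Longrightarrow> 0 \<le> eta t"
    and ss: "\<And>j. j < n \<Longrightarrow> j \<noteq> i \<Longrightarrow> s' j = s j"
    and sm: "\<And>w u j. j < n \<Longrightarrow> norm (grad w (s j) - grad u (s j)) \<le> beta * norm (w - u)"
  shows "norm (gd grad eta n W1 s T - gd grad eta n W1 s' T)
    \<le> (\<Sum>t\<in>{1..T}. (eta t / real n * (norm (grad (gd grad eta n W1 s (t-1)) (s i))
          + norm (grad (gd grad eta n W1 s' (t-1)) (s' i)))) * (\<Prod>j\<in>{t+1..T}. (1 + beta * eta j)))"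
  using eta
proof (induction T)
  case 0
  then show ?case by simp
next
  case (Suc T)
  define W where "W = gd grad eta n W1 s T"
  define W' where "W' = gd grad eta n W1 s' T"
  define a where "a = norm (grad W (s i))"
  define b where "b = norm (grad W' (s' i))"
  define c where "c t = eta t / real n * (norm (grad (gd grad eta n W1 s (t-1)) (s i))
          + norm (grad (gd grad eta n W1 s' (t-1)) (s' i)))" for t
  define q where "q j = 1 + beta * eta j" for j
  have et: "0 \<le> eta (Suc T)" using Suc.prems by auto
  have IH: "norm (W - W') \<le> (\<Sum>t\<in>{1..T}. c t * (\<Prod>j\<in>{t+1..T}. q j))"
    using Suc unfolding W_def W'_def c_def q_def by auto
  have trm: "norm (grad W (s j) - grad W' (s' j)) \<le> beta * norm (W - W') + (if j = i then a + b else 0)"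
    if "j < n" for j
  proof (cases "j = i")
    case True
    have "norm (grad W (s j) - grad W' (s' j)) \<le> a + b"
      using True norm_triangle_ineq4 unfolding a_def b_def by blast
    moreover have "0 \<le> beta * norm (W - W')" using beta by simp
    ultimately show ?thesis using True by simp
  next
    case False
    then show ?thesis using ss[OF that False] sm[OF that] by simp
  qed
  have "norm ((\<Sum>j<n. grad W (s j)) - (\<Sum>j<n. grad W' (s' j)))
      = norm (\<Sum>j<n. grad W (s j) - grad W' (s' j))" by (simp add: sum_subtractf)
  also have "\<dots> \<le> (\<Sum>j<n. norm (grad W (s j) - grad W' (s' j)))" by (rule norm_sum)
  also have "\<dots> \<le> (\<Sum>j<n. beta * norm (W - W') + (if j = i then a + b else 0))"
    by (rule sum_mono) (use trm in auto)
  also have "\<dots> = real n * (beta * norm (W - W')) + (a + b)"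
    using i by (simp add: sum.distrib)
  finally have S: "norm ((\<Sum>j<n. grad W (s j)) - (\<Sum>j<n. grad W' (s' j)))
      \<le> real n * (beta * norm (W - W')) + (a + b)" .
  have "gd grad eta n W1 s (Suc T) - gd grad eta n W1 s' (Suc T)
     = (W - W') - (eta (Suc T) / real n) *\<^sub>R ((\<Sum>j<n. grad W (s j)) - (\<Sum>j<n. grad W' (s' j)))"
    by (simp add: W_def W'_def scaleR_diff_right algebra_simps)
  also have "norm \<dots> \<le> norm (W - W') + (eta (Suc T) / real n) * norm ((\<Sum>j<n. grad W (s j)) - (\<Sum>j<n. grad W' (s' j)))"
    using et by (metis (no_types, lifting) abs_of_nonneg divide_nonneg_nonneg norm_scaleR norm_triangle_ineq4 of_nat_0_le_iff)
  also have "\<dots> \<le> norm (W - W') + (eta (Suc T) / real n) * (real n * (beta * norm (W - W')) + (a + b))"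
    using S et by (intro add_left_mono mult_left_mono) auto
  also have "\<dots> = q (Suc T) * norm (W - W') + c (Suc T)"
    using n by (simp add: q_def c_def a_def b_def W_def W'_def field_simps)
  also have "\<dots> \<le> q (Suc T) * (\<Sum>t\<in>{1..T}. c t * (\<Prod>j\<in>{t+1..T}. q j)) + c (Suc T)"
    using IH beta et by (intro add_right_mono mult_left_mono) (auto simp: q_def)
  also have "\<dots> = (\<Sum>t\<in>{1..Suc T}. c t * (\<Prod>j\<in>{t+1..Suc T}. q j))"
  proof -
    have "(\<Sum>t\<in>{1..T}. c t * (\<Prod>j\<in>{t+1..Suc T}. q j)) = (\<Sum>t\<in>{1..T}. q (Suc T) * (c t * (\<Prod>j\<in>{t+1..T}. q j)))"
      by (intro sum.cong refl) (auto simp: prod.cl_ivl_Suc)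
    then show ?thesis by (simp add: sum_distrib_left)
  qed
  finally show ?case unfolding c_def q_def .
qed

lemma gd_meas:
  fixes grad :: "'a::euclidean_space \<Rightarrow> 'z \<Rightarrow> 'a"
  assumes grad_meas: "(\<lambda>(w, z). grad w z) \<in> borel_measurable (borel \<Otimes>\<^sub>M D)"
  shows "(\<lambda>s. gd grad eta n W1 s k) \<in> borel_measurable (sample_space D n)"
    and "j \<le> n \<Longrightarrow> (\<lambda>s. grad (gd grad eta n W1 s k) (s j)) \<in> borel_measurable (sample_space D n)"
proof -
  have G: "(\<lambda>s. grad (F s) (s j)) \<in> borel_measurable (sample_space D n)"
    if F: "F \<in> borel_measurable (sample_space D n)" and j: "j \<le> n" for F :: "_ \<Rightarrow> 'a" and j
  proof -
    have "(\<lambda>s. (F s, s j)) \<in> measurable (sample_space D n) (borel \<Otimes>\<^sub>M D)"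
      unfolding sample_space_def using F j
      by (intro measurable_Pair) (auto simp: sample_space_def intro!: measurable_component_singleton)
    from measurable_compose[OF this grad_meas] show ?thesis by simp
  qed
  have M: "(\<lambda>s. gd grad eta n W1 s k) \<in> borel_measurable (sample_space D n)" for k
  proof (induction k)
    case 0 then show ?case by simp
  next
    case (Suc k)
    have "(\<lambda>s. (\<Sum>j<n. grad (gd grad eta n W1 s k) (s j))) \<in> borel_measurable (sample_space D n)"
      by (rule borel_measurable_sum[where f="\<lambda>j s. grad (gd grad eta n W1 s k) (s j)"]) (use G[OF Suc] in auto)
    then have "(\<lambda>s. (eta (Suc k) / real n) *\<^sub>R (\<Sum>j<n. grad (gd grad eta n W1 s k) (s j))) \<in> borel_measurable (sample_space D n)"
      by (intro borel_measurable_scaleR) auto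
    then show ?case using Suc by (simp add: borel_measurable_diff)
  qed
  show "(\<lambda>s. gd grad eta n W1 s k) \<in> borel_measurable (sample_space D n)" by (rule M)
  show "j \<le> n \<Longrightarrow> (\<lambda>s. grad (gd grad eta n W1 s k) (s j)) \<in> borel_measurable (sample_space D n)"
    using G[OF M] by blast
qed

lemma swap_integral:
  assumes D: "prob_space D" and i: "i < n"
    and hm: "h \<in> borel_measurable (sample_space D n)"
    and hc: "\<And>s s'. (\<And>j. j < n \<Longrightarrow> s j = s' j) \<Longrightarrow> h s = h s'"
  shows "(\<integral>\<^sup>+ s. ennreal (h (s(i := s n))) \<partial>sample_space D n) = (\<integral>\<^sup>+ s. ennreal (h s) \<partial>sample_space D n)"
proof -
  define f where "f m = (if m = i then n else if m = n then i else m)" for m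
  define \<sigma> where "\<sigma> s = (\<lambda>m\<in>{..n}. s (f m))" for s :: "nat \<Rightarrow> 'a"
  have inj: "inj_on f {..n}" unfolding f_def inj_on_def by auto
  have fr: "f \<in> {..n} \<rightarrow> {..n}" unfolding f_def using i by auto
  have dist: "distr (sample_space D n) (sample_space D n) \<sigma> = sample_space D n"
    unfolding sample_space_def \<sigma>_def using distr_PiM_reindex[of "{..n}" "\<lambda>_. D", OF D inj fr] by simp
  have sm: "\<sigma> \<in> measurable (sample_space D n) (sample_space D n)"
    unfolding sample_space_def \<sigma>_def
    by (rule measurable_restrict) (use fr in \<open>auto intro!: measurable_component_singleton\<close>)
  have "(\<integral>\<^sup>+ s. ennreal (h s) \<partial>sample_space D n) = (\<integral>\<^sup>+ s. ennreal (h s) \<partial>distr (sample_space D n) (sample_space D n) \<sigma>)"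
    by (simp add: dist)
  also have "\<dots> = (\<integral>\<^sup>+ s. ennreal (h (\<sigma> s)) \<partial>sample_space D n)"
    by (rule nn_integral_distr[OF sm]) (use hm in simp)
  also have "\<dots> = (\<integral>\<^sup>+ s. ennreal (h (s(i := s n))) \<partial>sample_space D n)"
    by (intro nn_integral_cong arg_cong[where f=ennreal] hc) (auto simp: \<sigma>_def f_def)
  finally show ?thesis ..
qed

theorem theorem7:
  fixes D :: "'z measure"
    and f :: "'a::euclidean_space \<Rightarrow> 'z \<Rightarrow> real"
    and grad :: "'a \<Rightarrow> 'z \<Rightarrow> 'a"
    and eta :: "nat \<Rightarrow> real"
    and beta :: real and W1 :: 'a and n T i :: nat
  assumes D: "prob_space D"
    and nonneg: "\<And>w z. z \<in> space D \<Longrightarrow> 0 \<le> f w z"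
    and gradient: "\<And>w z. z \<in> space D \<Longrightarrow> GDERIV (\<lambda>v. f v z) w :> grad w z"
    and smooth: "\<And>w u z. z \<in> space D \<Longrightarrow> norm (grad w z - grad u z) \<le> beta * norm (w - u)"
    and grad_meas: "(\<lambda>(w, z). grad w z) \<in> borel_measurable (borel \<Otimes>\<^sub>M D)"
    and eta_pos: "\<And>t. t \<in> {1..T} \<Longrightarrow> 0 < eta t"
    and i: "i < n"
  shows "eps_stab D grad eta n W1 T i
         \<le> ennreal (4 / (real n)\<^sup>2) * eps_path D grad eta n W1 T i
             * ennreal (\<Sum>t\<in>{1..T}. eta t * (\<Prod>j\<in>{t+1..T}. (1 + beta * eta j)\<^sup>2))"
proof -
  define P where "P = sample_space D n"
  have n: "0 < n" using i by simp
  obtain z0 where z0: "z0 \<in> space D" using prob_space.not_empty[OF D] by auto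
  obtain e :: 'a where e: "e \<in> Basis" using nonempty_Basis by blast
  have beta: "0 \<le> beta"
    using smooth[OF z0, of e 0] e norm_ge_zero[of "grad e z0 - grad 0 z0"] by (simp del: norm_ge_zero)
  have eta0: "\<And>t. t \<in> {1..T} \<Longrightarrow> 0 \<le> eta t" using eta_pos by (simp add: less_imp_le)
  define a where "a t s = norm (grad (gd grad eta n W1 s (t-1)) (s i))" for t s
  define Pr where "Pr t = (\<Prod>j\<in>{t+1..T}. (1 + beta * eta j))" for t
  define Q where "Q = (\<Sum>t\<in>{1..T}. eta t * (Pr t)\<^sup>2)"
  define c where "c t = Q * eta t * (2 / (real n)\<^sup>2)" for t
  have Q0: "0 \<le> Q" unfolding Q_def using eta0 by (auto intro!: sum_nonneg)
  have c0: "t \<in> {1..T} \<Longrightarrow> 0 \<le> c t" for t unfolding c_def using Q0 eta0 by auto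
  have spc: "s j \<in> space D" if "s \<in> space P" "j \<le> n" for s j
    using that unfolding P_def sample_space_def by (auto simp: space_PiM PiE_iff)
  have pw: "(norm (gd grad eta n W1 s T - gd grad eta n W1 (s(i := s n)) T))\<^sup>2
      \<le> (\<Sum>t\<in>{1..T}. c t * ((a t s)\<^sup>2 + (a t (s(i := s n)))\<^sup>2))" if s: "s \<in> space P" for s
  proof -
    define s' where "s' = s(i := s n)"
    have b: "a t s' = norm (grad (gd grad eta n W1 s' (t-1)) (s' i))" for t
      unfolding a_def ..
    have "norm (gd grad eta n W1 s T - gd grad eta n W1 s' T)
      \<le> (\<Sum>t\<in>{1..T}. (eta t / real n * (a t s + a t s')) * Pr t)"
      unfolding a_def Pr_def
      by (rule gd_bound[OF n i beta eta0]) (auto simp: s'_def intro!: smooth spc[OF s])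
    also have "\<dots> = (\<Sum>t\<in>{1..T}. (sqrt (eta t) * ((a t s + a t s') / real n)) * (sqrt (eta t) * Pr t))"
    proof (intro sum.cong refl)
      fix t assume t: "t \<in> {1..T}"
      have h: "eta t = sqrt (eta t) * sqrt (eta t)" using eta0[OF t] by simp
      have "eta t / real n * (a t s + a t s') * Pr t = (sqrt (eta t) * sqrt (eta t)) / real n * (a t s + a t s') * Pr t"
        by (subst h) (rule refl)
      also have "\<dots> = (sqrt (eta t) * ((a t s + a t s') / real n)) * (sqrt (eta t) * Pr t)"
        by (simp only: times_divide_eq_right times_divide_eq_left mult_ac)
      finally show "eta t / real n * (a t s + a t s') * Pr t = (sqrt (eta t) * ((a t s + a t s') / real n)) * (sqrt (eta t) * Pr t)" .
    qed
    finally have L: "norm (gd grad eta n W1 s T - gd grad eta n W1 s' T) \<le> \<dots>" .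
    have "(norm (gd grad eta n W1 s T - gd grad eta n W1 s' T))\<^sup>2
       \<le> (\<Sum>t\<in>{1..T}. (sqrt (eta t) * ((a t s + a t s') / real n)) * (sqrt (eta t) * Pr t))\<^sup>2"
      by (rule power_mono[OF L norm_ge_zero])
    also have "\<dots> \<le> (\<Sum>t\<in>{1..T}. (sqrt (eta t) * ((a t s + a t s') / real n))\<^sup>2) * (\<Sum>t\<in>{1..T}. (sqrt (eta t) * Pr t)\<^sup>2)"
      by (rule Cauchy_Schwarz_ineq_sum)
    also have "(\<Sum>t\<in>{1..T}. (sqrt (eta t) * Pr t)\<^sup>2) = Q"
      unfolding Q_def by (intro sum.cong refl) (use eta0 in \<open>auto simp: power_mult_distrib\<close>)
    also have "(\<Sum>t\<in>{1..T}. (sqrt (eta t) * ((a t s + a t s') / real n))\<^sup>2)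
       \<le> (\<Sum>t\<in>{1..T}. eta t * (2 / (real n)\<^sup>2) * ((a t s)\<^sup>2 + (a t s')\<^sup>2))"
    proof (rule sum_mono)
      fix t assume t: "t \<in> {1..T}"
      have "(a t s + a t s')\<^sup>2 \<le> 2 * ((a t s)\<^sup>2 + (a t s')\<^sup>2)"
        by (smt (verit) sum_squares_ge_zero power2_sum zero_le_power2 power2_diff)
      then have "((a t s + a t s') / real n)\<^sup>2 \<le> (2 / (real n)\<^sup>2) * ((a t s)\<^sup>2 + (a t s')\<^sup>2)"
        using n by (simp add: power_divide divide_right_mono)
      then have "eta t * ((a t s + a t s') / real n)\<^sup>2 \<le> eta t * ((2 / (real n)\<^sup>2) * ((a t s)\<^sup>2 + (a t s')\<^sup>2))"
        using eta0[OF t] by (rule mult_left_mono)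
      moreover have "(sqrt (eta t) * ((a t s + a t s') / real n))\<^sup>2 = eta t * ((a t s + a t s') / real n)\<^sup>2"
        using eta0[OF t] by (simp only: power_mult_distrib real_sqrt_pow2)
      ultimately show "(sqrt (eta t) * ((a t s + a t s') / real n))\<^sup>2 \<le> eta t * (2 / (real n)\<^sup>2) * ((a t s)\<^sup>2 + (a t s')\<^sup>2)"
        by (simp only: mult.assoc)
    qed
    then have "(\<Sum>t\<in>{1..T}. (sqrt (eta t) * ((a t s + a t s') / real n))\<^sup>2) * Q
       \<le> (\<Sum>t\<in>{1..T}. eta t * (2 / (real n)\<^sup>2) * ((a t s)\<^sup>2 + (a t s')\<^sup>2)) * Q"
      using Q0 by (rule mult_right_mono)
    also have "\<dots> = (\<Sum>t\<in>{1..T}. c t * ((a t s)\<^sup>2 + (a t s')\<^sup>2))"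
      unfolding c_def sum_distrib_right by (intro sum.cong refl) (simp add: mult_ac)
    finally show ?thesis unfolding s'_def .
  qed
  define A where "A t = (\<integral>\<^sup>+ s. ennreal ((a t s)\<^sup>2) \<partial>P)" for t
  have am: "(\<lambda>s. a t s) \<in> borel_measurable P" for t
    unfolding a_def P_def using gd_meas(2)[OF grad_meas, of i] i by simp
  have am': "(\<lambda>s. a t (s(i := s n))) \<in> borel_measurable P" for t
  proof -
    have "(\<lambda>s. s(i := s n)) \<in> measurable P P"
      unfolding P_def sample_space_def
    proof (rule measurable_PiM_single')
      show "\<And>j. j \<in> {..n} \<Longrightarrow> (\<lambda>x. (x(i := x n)) j) \<in> measurable (PiM {..n} (\<lambda>_. D)) D"
        by (auto intro!: measurable_component_singleton)
      show "(\<lambda>x. x(i := x n)) \<in> space (PiM {..n} (\<lambda>_. D)) \<rightarrow> (\<Pi>\<^sub>E i\<in>{..n}. space D)"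
        using i by (auto simp: space_PiM PiE_iff)
    qed
    from measurable_compose[OF this am] show ?thesis by simp
  qed
  have sym: "(\<integral>\<^sup>+ s. ennreal ((a t (s(i := s n)))\<^sup>2) \<partial>P) = A t" for t
    unfolding A_def P_def
  proof (rule swap_integral[OF D i, where h="\<lambda>s. (a t s)\<^sup>2"])
    show "(\<lambda>s. (a t s)\<^sup>2) \<in> borel_measurable (sample_space D n)"
      using am unfolding P_def by simp
    fix s s' :: "nat \<Rightarrow> 'z" assume "\<And>j. j < n \<Longrightarrow> s j = s' j"
    then show "(a t s)\<^sup>2 = (a t s')\<^sup>2"
      unfolding a_def using gd_cong[of n s s'] i by metis
  qed
  have "eps_stab D grad eta n W1 T i
     \<le> (\<integral>\<^sup>+ s. (\<Sum>t\<in>{1..T}. ennreal (c t) * ennreal ((a t s)\<^sup>2) + ennreal (c t) * ennreal ((a t (s(i := s n)))\<^sup>2)) \<partial>P)"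
    unfolding eps_stab_def P_def[symmetric]
  proof (rule nn_integral_mono)
    fix s assume s: "s \<in> space P"
    have "ennreal ((norm (gd grad eta n W1 s T - gd grad eta n W1 (s(i := s n)) T))\<^sup>2)
       \<le> ennreal (\<Sum>t\<in>{1..T}. c t * ((a t s)\<^sup>2 + (a t (s(i := s n)))\<^sup>2))"
      using pw[OF s] by (rule ennreal_leI)
    also have "\<dots> = (\<Sum>t\<in>{1..T}. ennreal (c t * ((a t s)\<^sup>2 + (a t (s(i := s n)))\<^sup>2)))"
      by (rule sum_ennreal[symmetric]) (use c0 in auto)
    also have "\<dots> = (\<Sum>t\<in>{1..T}. ennreal (c t) * ennreal ((a t s)\<^sup>2) + ennreal (c t) * ennreal ((a t (s(i := s n)))\<^sup>2))"
      by (intro sum.cong refl) (use c0 in \<open>auto simp: ennreal_mult ennreal_plus distrib_left\<close>)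
    finally show "ennreal ((norm (gd grad eta n W1 s T - gd grad eta n W1 (s(i := s n)) T))\<^sup>2) \<le> \<dots>" .
  qed
  also have "\<dots> = (\<Sum>t\<in>{1..T}. ennreal (c t) * A t + ennreal (c t) * A t)"
  proof -
    have "(\<integral>\<^sup>+ s. (\<Sum>t\<in>{1..T}. ennreal (c t) * ennreal ((a t s)\<^sup>2) + ennreal (c t) * ennreal ((a t (s(i := s n)))\<^sup>2)) \<partial>P)
      = (\<Sum>t\<in>{1..T}. (\<integral>\<^sup>+ s. ennreal (c t) * ennreal ((a t s)\<^sup>2) + ennreal (c t) * ennreal ((a t (s(i := s n)))\<^sup>2) \<partial>P))"
      by (rule nn_integral_sum) (use am am' in auto)
    also have "\<dots> = (\<Sum>t\<in>{1..T}. ennreal (c t) * A t + ennreal (c t) * A t)"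
    proof (intro sum.cong refl)
      fix t
      show "(\<integral>\<^sup>+ s. ennreal (c t) * ennreal ((a t s)\<^sup>2) + ennreal (c t) * ennreal ((a t (s(i := s n)))\<^sup>2) \<partial>P)
         = ennreal (c t) * A t + ennreal (c t) * A t"
        using am[of t] am'[of t]
        by (simp add: nn_integral_add nn_integral_cmult sym[of t] A_def)
    qed
    finally show ?thesis .
  qed
  also have "\<dots> = (\<Sum>t\<in>{1..T}. ennreal (4 / (real n)\<^sup>2) * (ennreal (eta t) * A t) * ennreal Q)"
  proof (intro sum.cong refl)
    fix t assume t: "t \<in> {1..T}"
    have "ennreal (c t) * 2 = ennreal (4 / (real n)\<^sup>2) * ennreal (eta t) * ennreal Q"
      using eta0[OF t] Q0 c0[OF t]
      by (simp add: c_def ennreal_mult[symmetric] ennreal_numeral[symmetric] del: ennreal_numeral)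
    then show "ennreal (c t) * A t + ennreal (c t) * A t = ennreal (4 / (real n)\<^sup>2) * (ennreal (eta t) * A t) * ennreal Q"
      by (metis (no_types, lifting) mult_2_right distrib_left mult.commute mult.left_commute mult.assoc one_add_one)
  qed
  also have "\<dots> = ennreal (4 / (real n)\<^sup>2) * eps_path D grad eta n W1 T i * ennreal Q"
    unfolding eps_path_def A_def a_def P_def by (simp add: sum_distrib_left sum_distrib_right)
  finally show ?thesis unfolding Q_def Pr_def by (simp add: prod_power_distrib)
qed

end
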